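(* Let $p$ be a prime. The only $p$-archimedean divisibility $|$ on the field $\mathbb{Q}$ with $p\nmid1$ is the one given by the $p$-adic valuation: $a|b\Leftrightarrow v_p(a)\le v_p(b)$.
   Context: A divisibility on a commutative ring $A$ with $1\neq0$ is a binary relation $|\subseteq A\times A$ such that for all $a,b,c$: (1) $a|a$; (2) $a|b,\ b|c\Rightarrow a|c$; (3) $a|b,\ a|c\Rightarrow a|b-c$; (4) $a|b\Rightarrow ac|bc$; (5) $0\nmid1$. A divisibility on $\mathbb{Q}$ is $p$-archimedean if for every $a\in\mathbb{Q}$ there is $m\in\mathbb{Z}$ with $p^m|a$. *)

theory Defs
  imports Complex_Main "HOL-Computational_Algebra.Primes"
begin

definition divisibility :: "('a::comm_ring_1 \<Rightarrow> 'a \<Rightarrow> bool) \<Rightarrow> bool" where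
  "divisibility D \<longleftrightarrow>
     (\<forall>a. D a a) \<and>
     (\<forall>a b c. D a b \<longrightarrow> D b c \<longrightarrow> D a c) \<and>
     (\<forall>a b c. D a b \<longrightarrow> D a c \<longrightarrow> D a (b - c)) \<and>
     (\<forall>a b c. D a b \<longrightarrow> D (a * c) (b * c)) \<and>
     \<not> D 0 1"

definition p_archimedean :: "nat \<Rightarrow> (rat \<Rightarrow> rat \<Rightarrow> bool) \<Rightarrow> bool" where
  "p_archimedean p D \<longleftrightarrow> (\<forall>a::rat. \<exists>m::int. D ((of_nat p) powi m) a)"

definition padic_val :: "nat \<Rightarrow> rat \<Rightarrow> int" where
  "padic_val p r = (case quotient_of r of (a, b) \<Rightarrow>
      int (multiplicity (int p) a) - int (multiplicity (int p) b))"

text \<open>a | b iff v_p(a) \<le> v_p(b), with the convention v_p(0) = \<infinity>.\<close>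
definition padic_dvd :: "nat \<Rightarrow> rat \<Rightarrow> rat \<Rightarrow> bool" where
  "padic_dvd p a b \<longleftrightarrow> b = 0 \<or> (a \<noteq> 0 \<and> padic_val p a \<le> padic_val p b)"

end

theory Submission
  imports Defs
begin

definition zp :: "nat \<Rightarrow> rat \<Rightarrow> bool" where
  "zp p x \<longleftrightarrow> (\<exists>n d. \<not> int p dvd d \<and> x = of_int n / of_int d)"

lemma v_frac:
  assumes P: "prime (int p)" and n: "n \<noteq> 0" and d: "d \<noteq> 0"
  shows "padic_val p (of_int n / of_int d) = int (multiplicity (int p) n) - int (multiplicity (int p) d)"
proof -
  obtain a b where q: "quotient_of (of_int n / of_int d) = (a,b)" by (cases "quotient_of (of_int n / of_int d)")
  have eq: "(of_int n / of_int d :: rat) = of_int a / of_int b" using quotient_of_div[OF q] .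
  have b: "b > 0" using quotient_of_denom_pos[OF q] .
  have "(of_int (n * b) :: rat) = of_int (a * d)" using eq b d by (simp add: field_simps)
  hence nb: "n * b = a * d" by (simp only: of_int_eq_iff)
  have a: "a \<noteq> 0" using nb n b by auto
  have "multiplicity (int p) (n*b) = multiplicity (int p) (a*d)" using nb by simp
  hence "multiplicity (int p) n + multiplicity (int p) b = multiplicity (int p) a + multiplicity (int p) d"
    using prime_elem_multiplicity_mult_distrib[of "int p"] P n b a d by (simp add: prime_imp_prime_elem)
  thus ?thesis unfolding padic_val_def q by simp
qed

lemma v_zero: "padic_val p 0 = 0"
  unfolding padic_val_def by simp

lemma zp_iff:
  assumes P: "prime (int p)"
  shows "zp p x \<longleftrightarrow> padic_val p x \<ge> 0"
proof
  assume "zp p x"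
  then obtain n d where nd: "\<not> int p dvd d" "x = of_int n / of_int d" unfolding zp_def by blast
  have d: "d \<noteq> 0" using nd by auto
  show "padic_val p x \<ge> 0"
  proof (cases "n = 0")
    case True thus ?thesis using nd v_zero by simp
  next
    case False
    thus ?thesis using v_frac[OF P False d] nd not_dvd_imp_multiplicity_0[of "int p" d] by simp
  qed
next
  assume v: "padic_val p x \<ge> 0"
  obtain a b where q: "quotient_of x = (a,b)" by (cases "quotient_of x")
  have x: "x = of_int a / of_int b" using quotient_of_div[OF q] .
  have cop: "coprime a b" using quotient_of_coprime[OF q] .
  have "\<not> int p dvd b"
  proof
    assume pb: "int p dvd b"
    have "\<not> int p dvd a"
    proof
      assume "int p dvd a"
      hence "int p dvd 1" using pb cop by (meson coprime_common_divisor)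
      thus False using P using not_prime_unit by blast
    qed
    hence "multiplicity (int p) a = 0" by (rule not_dvd_imp_multiplicity_0)
    moreover have "multiplicity (int p) b \<ge> 1"
      using pb quotient_of_denom_pos[OF q] P
      by (metis dvd_refl multiplicity_geI not_prime_unit not_less_iff_gr_or_eq power_one_right prime_imp_prime_elem prime_elem_not_zeroI)
    ultimately show False using v unfolding padic_val_def q by simp
  qed
  thus "zp p x" unfolding zp_def using x by blast
qed


lemma v_div:
  assumes P: "prime (int p)" and a: "a \<noteq> 0" and b: "b \<noteq> 0"
  shows "padic_val p (b / a) = padic_val p b - padic_val p a"
proof -
  obtain na da where qa: "quotient_of a = (na,da)" by (cases "quotient_of a")
  obtain nb db where qb: "quotient_of b = (nb,db)" by (cases "quotient_of b")
  have ea: "a = of_int na / of_int da" using quotient_of_div[OF qa] .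
  have eb: "b = of_int nb / of_int db" using quotient_of_div[OF qb] .
  have da: "da > 0" using quotient_of_denom_pos[OF qa] .
  have db: "db > 0" using quotient_of_denom_pos[OF qb] .
  have na: "na \<noteq> 0" using ea a by auto
  have nb: "nb \<noteq> 0" using eb b by auto
  have "b / a = of_int (nb * da) / of_int (db * na)" unfolding ea eb using da db na by (simp add: field_simps)
  hence "padic_val p (b/a) = int (multiplicity (int p) (nb*da)) - int (multiplicity (int p) (db*na))"
    using v_frac[OF P, of "nb*da" "db*na"] na nb da db by simp
  also have "\<dots> = (int (multiplicity (int p) nb) - int (multiplicity (int p) db))
     - (int (multiplicity (int p) na) - int (multiplicity (int p) da))"
    using prime_elem_multiplicity_mult_distrib[of "int p"] P na nb da db by (simp add: prime_imp_prime_elem)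
  also have "\<dots> = padic_val p b - padic_val p a"
    using v_frac[OF P nb] v_frac[OF P na] da db ea eb by simp
  finally show ?thesis .
qed

lemma padic_dvd_alt:
  assumes P: "prime (int p)"
  shows "padic_dvd p a b \<longleftrightarrow> b = 0 \<or> (a \<noteq> 0 \<and> zp p (b / a))"
  unfolding padic_dvd_def zp_iff[OF P] using v_div[OF P, of a b] by auto

lemma zp_int: assumes P: "prime (int p)" shows "zp p (of_int n)"
  unfolding zp_def using P by (intro exI[of _ n] exI[of _ 1]) (auto simp: prime_int_iff)

lemma zp_0: assumes P: "prime (int p)" shows "zp p 0" using zp_int[OF P, of 0] by simp
lemma zp_1: assumes P: "prime (int p)" shows "zp p 1" using zp_int[OF P, of 1] by simp

lemma zp_diff:
  assumes P: "prime (int p)" and x: "zp p x" and y: "zp p y"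
  shows "zp p (x - y)"
proof -
  obtain n d where nd: "\<not> int p dvd d" "x = of_int n / of_int d" using x unfolding zp_def by blast
  obtain m e where me: "\<not> int p dvd e" "y = of_int m / of_int e" using y unfolding zp_def by blast
  have "d \<noteq> 0" "e \<noteq> 0" using nd me by auto
  hence "x - y = of_int (n*e - m*d) / of_int (d*e)" unfolding nd(2) me(2) by (simp add: field_simps)
  moreover have "\<not> int p dvd d*e" using nd me P by (simp add: prime_dvd_mult_iff)
  ultimately show ?thesis unfolding zp_def by blast
qed

lemma zp_mult:
  assumes P: "prime (int p)" and x: "zp p x" and y: "zp p y"
  shows "zp p (x * y)"
proof -
  obtain n d where nd: "\<not> int p dvd d" "x = of_int n / of_int d" using x unfolding zp_def by blast
  obtain m e where me: "\<not> int p dvd e" "y = of_int m / of_int e" using y unfolding zp_def by blast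
  have "x * y = of_int (n*m) / of_int (d*e)" unfolding nd(2) me(2) by (simp add: field_simps)
  moreover have "\<not> int p dvd d*e" using nd me P by (simp add: prime_dvd_mult_iff)
  ultimately show ?thesis unfolding zp_def by blast
qed


lemma padic_divisibility:
  assumes P: "prime (int p)"
  shows "divisibility (padic_dvd p)"
  unfolding divisibility_def padic_dvd_alt[OF P]
proof (intro conjI allI impI)
  fix a show "a = 0 \<or> a \<noteq> 0 \<and> zp p (a / a)" using zp_1[OF P] by auto
next
  fix a b c assume ab: "b = 0 \<or> a \<noteq> 0 \<and> zp p (b / a)" and bc: "c = 0 \<or> b \<noteq> 0 \<and> zp p (c / b)"
  show "c = 0 \<or> a \<noteq> 0 \<and> zp p (c / a)"
  proof (cases "c = 0")
    case False
    hence b: "b \<noteq> 0" "zp p (c/b)" using bc by auto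
    hence a: "a \<noteq> 0" "zp p (b/a)" using ab by auto
    have "c / a = (c/b) * (b/a)" using a b by simp
    thus ?thesis using zp_mult[OF P b(2) a(2)] a by simp
  qed simp
next
  fix a b c assume ab: "b = 0 \<or> a \<noteq> 0 \<and> zp p (b / a)" and ac: "c = 0 \<or> a \<noteq> 0 \<and> zp p (c / a)"
  show "b - c = 0 \<or> a \<noteq> 0 \<and> zp p ((b - c) / a)"
  proof (cases "b - c = 0")
    case False
    hence a: "a \<noteq> 0" using ab ac by auto
    have "zp p (b/a)" "zp p (c/a)" using ab ac zp_0[OF P] by auto
    hence "zp p (b/a - c/a)" by (rule zp_diff[OF P])
    thus ?thesis using a by (simp add: diff_divide_distrib)
  qed simp
next
  fix a b c assume ab: "b = 0 \<or> a \<noteq> 0 \<and> zp p (b / a)"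
  show "b * c = 0 \<or> a * c \<noteq> 0 \<and> zp p (b * c / (a * c))"
  proof (cases "b * c = 0")
    case False
    hence "c \<noteq> 0" "b \<noteq> 0" by auto
    thus ?thesis using ab by simp
  qed simp
next
  show "\<not> (1 = (0::rat) \<or> (0::rat) \<noteq> 0 \<and> zp p (1 / 0))" by simp
qed

lemma padic_arch:
  assumes P: "prime (int p)"
  shows "p_archimedean p (padic_dvd p)"
  unfolding p_archimedean_def
proof
  fix a :: rat
  show "\<exists>m. padic_dvd p (of_nat p powi m) a"
  proof (cases "a = 0")
    case True thus ?thesis unfolding padic_dvd_def by simp
  next
    case False
    obtain n d where q: "quotient_of a = (n,d)" by (cases "quotient_of a")
    have ea: "a = of_int n / of_int d" using quotient_of_div[OF q] .
    have d: "d > 0" using quotient_of_denom_pos[OF q] .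
    obtain d' where d': "d = int p ^ multiplicity (int p) d * d'" "\<not> int p dvd d'"
    proof -
      have "d \<noteq> 0" "\<not> is_unit (int p)" using d P not_prime_unit by auto
      thus ?thesis using multiplicity_decompose'[of d "int p"] that by blast
    qed
    define k where "k = multiplicity (int p) d"
    have p0: "(of_nat p :: rat) \<noteq> 0" using P by (auto simp: prime_int_iff)
    have "of_nat p powi (- int k) = inverse ((of_nat p :: rat) ^ k)" by (simp add: power_int_minus)
    moreover have "a / inverse ((of_nat p :: rat) ^ k) = of_int n / of_int d'"
      unfolding ea using d' p0 d unfolding k_def[symmetric] by (simp add: field_simps)
    ultimately have "zp p (a / of_nat p powi (- int k))" unfolding zp_def using d' by metis
    moreover have "of_nat p powi (- int k) \<noteq> (0::rat)" using p0 by simp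
    ultimately show ?thesis unfolding padic_dvd_alt[OF P] by blast
  qed
qed

lemma not_zp_inv_p:
  assumes P: "prime (int p)"
  shows "\<not> zp p (1 / of_nat p)"
proof -
  have "(1 / of_nat p :: rat) = of_int 1 / of_int (int p)" by simp
  hence "padic_val p (1 / of_nat p) = int (multiplicity (int p) 1) - int (multiplicity (int p) (int p))"
    using v_frac[OF P, of 1 "int p"] P by (auto simp: prime_int_iff)
  also have "\<dots> = -1" using P by (simp add: prime_imp_prime_elem)
  finally show ?thesis unfolding zp_iff[OF P] by simp
qed

lemma padic_not_p1:
  assumes P: "prime (int p)"
  shows "\<not> padic_dvd p (of_nat p) 1"
  unfolding padic_dvd_alt[OF P] using not_zp_inv_p[OF P] by simp


lemma forward:
  assumes P: "prime (int p)" and Dd: "divisibility D" and Da: "p_archimedean p D"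
    and Dp: "\<not> D (of_nat p) 1"
  shows "D a b \<longleftrightarrow> padic_dvd p a b"
proof -
  have refl: "\<And>a. D a a" and trans: "\<And>a b c. D a b \<Longrightarrow> D b c \<Longrightarrow> D a c"
    and sub: "\<And>a b c. D a b \<Longrightarrow> D a c \<Longrightarrow> D a (b - c)"
    and mul: "\<And>a b c. D a b \<Longrightarrow> D (a * c) (b * c)" and n01: "\<not> D 0 1"
    using Dd unfolding divisibility_def by blast+
  have D0: "\<And>a. D a 0" using sub[OF refl refl] by simp
  have Dz: "\<And>b. D 0 b \<Longrightarrow> b = 0"
  proof (rule ccontr)
    fix b assume "D 0 b" "b \<noteq> 0"
    thus False using mul[of 0 b "1/b"] n01 by simp
  qed
  have Dq: "\<And>a b. a \<noteq> 0 \<Longrightarrow> D a b \<longleftrightarrow> D 1 (b / a)"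
  proof -
    fix a b :: rat assume a: "a \<noteq> 0"
    show "D a b \<longleftrightarrow> D 1 (b / a)"
    proof
      assume "D a b" thus "D 1 (b/a)" using mul[of a b "1/a"] a by simp
    next
      assume "D 1 (b/a)" thus "D a b" using mul[of 1 "b/a" a] a by simp
    qed
  qed
  have Sneg: "\<And>x. D 1 x \<Longrightarrow> D 1 (- x)" using sub[OF D0] by (metis diff_0)
  have Sadd: "\<And>x y. D 1 x \<Longrightarrow> D 1 y \<Longrightarrow> D 1 (x + y)"
    using sub Sneg by (metis diff_minus_eq_add)
  have Smul: "\<And>x y. D 1 x \<Longrightarrow> D 1 y \<Longrightarrow> D 1 (x * y)"
    using mul trans by (metis mult_1)
  have Snat: "\<And>n::nat. D 1 (of_nat n)"
  proof -
    fix n :: nat show "D 1 (of_nat n)"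
      by (induction n) (auto simp: D0 refl intro: Sadd)
  qed
  have Sint: "\<And>n::int. D 1 (of_int n)"
  proof -
    fix n :: int show "D 1 (of_int n)"
    proof (cases "n \<ge> 0")
      case True thus ?thesis using Snat[of "nat n"] by simp
    next
      case False thus ?thesis using Sneg[OF Snat[of "nat (-n)"]] by simp
    qed
  qed
  have p0: "(of_nat p :: rat) \<noteq> 0" using P by (auto simp: prime_int_iff)
  have noinv: "\<not> D 1 (1 / of_nat p)" using Dq[OF p0, of 1] Dp by simp
  have S_zp: "\<And>x. D 1 x \<Longrightarrow> zp p x"
  proof (rule ccontr)
    fix x assume Sx: "D 1 x" and nz: "\<not> zp p x"
    obtain a b where q: "quotient_of x = (a,b)" by (cases "quotient_of x")
    have x: "x = of_int a / of_int b" using quotient_of_div[OF q] .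
    have cop: "coprime a b" using quotient_of_coprime[OF q] .
    have b: "b > 0" using quotient_of_denom_pos[OF q] .
    have pb: "int p dvd b" using nz x unfolding zp_def by blast
    then obtain c where c: "b = int p * c" by (auto simp: dvd_def)
    have "\<not> int p dvd a"
    proof
      assume "int p dvd a"
      hence "int p dvd 1" using pb cop by (meson coprime_common_divisor)
      thus False using P not_prime_unit by blast
    qed
    hence "coprime (int p) a" using P prime_imp_coprime by blast
    hence "gcd a (int p) = 1" by (simp add: coprime_iff_gcd_eq_1 gcd.commute)
    then obtain u w where uw: "u * a + w * int p = 1" using bezout_int[of a "int p"] by auto
    have c0: "c \<noteq> 0" using c b by auto
    have "x * of_int c = of_int a / of_nat p" unfolding x c using c0 p0 by (simp add: field_simps)
    hence S1: "D 1 (of_int a / of_nat p)" using Smul[OF Sx Sint[of c]] by simp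
    have "1 / of_nat p = of_int u * (of_int a / of_nat p) + (of_int w :: rat)"
    proof -
      have "(of_int u * of_int a + of_int w * of_nat p :: rat) = 1"
        using arg_cong[OF uw, of "of_int :: int \<Rightarrow> rat"] by simp
      thus ?thesis using p0 by (simp add: field_simps)
    qed
    hence "D 1 (1 / of_nat p)" using Sadd[OF Smul[OF Sint[of u] S1] Sint[of w]] by simp
    thus False using noinv by simp
  qed
  have zp_S: "\<And>x. zp p x \<Longrightarrow> D 1 x"
  proof -
    fix x assume "zp p x"
    then obtain n d where nd: "\<not> int p dvd d" "x = of_int n / of_int d" unfolding zp_def by blast
    have d0: "d \<noteq> 0" using nd by auto
    obtain m where m: "D (of_nat p powi m) (1 / of_int d)" using Da unfolding p_archimedean_def by blast
    have pm0: "(of_nat p :: rat) powi m \<noteq> 0" using p0 by simp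
    have Sm: "D 1 ((1 / of_int d) / of_nat p powi m)" using Dq[OF pm0] m by simp
    have inv: "D 1 (1 / of_int d)"
    proof (cases "m \<ge> 0")
      case True
      have "(of_nat p :: rat) powi m = of_int (int p ^ nat m)" using True
        by (metis of_int_of_nat_eq of_int_power power_int_of_nat nat_0_le)
      hence Sm': "D 1 ((1 / of_int d) / of_int (int p ^ nat m))" using Sm by simp
      have "of_int (int p ^ nat m) \<noteq> (0::rat)" using p0 by simp
      hence "(1::rat) / of_int d = of_int (int p ^ nat m) * ((1 / of_int d) / of_int (int p ^ nat m))"
        by simp
      thus ?thesis using Smul[OF Sint Sm'] by metis
    next
      case False
      define k where "k = nat (-m)"
      have "(of_nat p :: rat) powi m = inverse (of_nat p ^ k)"
        unfolding k_def using False
        by (metis power_int_minus power_int_of_nat minus_minus nat_0_le neg_0_le_iff_le less_imp_le not_le)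
      hence Sk: "D 1 (of_int (int p ^ k) / of_int d)" using Sm by (simp add: divide_inverse mult.commute)
      have "coprime (int p) d" using P nd(1) prime_imp_coprime by blast
      hence "coprime (int p ^ k) d" by simp
      hence "gcd (int p ^ k) d = 1" by (simp add: coprime_iff_gcd_eq_1)
      then obtain u w where uw: "u * int p ^ k + w * d = 1" using bezout_int[of "int p ^ k" d] by auto
      have "1 / of_int d = of_int u * (of_int (int p ^ k) / of_int d) + (of_int w :: rat)"
      proof -
        have "(of_int u * of_int (int p ^ k) + of_int w * of_int d :: rat) = 1"
          using arg_cong[OF uw, of "of_int :: int \<Rightarrow> rat"] by simp
        thus ?thesis using d0 by (simp add: field_simps)
      qed
      thus ?thesis using Sadd[OF Smul[OF Sint[of u] Sk] Sint[of w]] by metis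
    qed
    have "x = of_int n * (1 / of_int d)" using nd by simp
    thus "D 1 x" using Smul[OF Sint inv] by metis
  qed
  show ?thesis
  proof (cases "b = 0")
    case True thus ?thesis using D0 unfolding padic_dvd_def by simp
  next
    case b: False
    show ?thesis
    proof (cases "a = 0")
      case True thus ?thesis using Dz b unfolding padic_dvd_def by auto
    next
      case False
      thus ?thesis unfolding padic_dvd_alt[OF P] Dq[OF False] using S_zp[of "b/a"] zp_S[of "b/a"] b by blast
    qed
  qed
qed

theorem proposition4p3:
  fixes p :: nat and D :: "rat \<Rightarrow> rat \<Rightarrow> bool"
  assumes "prime p"
  shows "(divisibility D \<and> p_archimedean p D \<and> \<not> D (of_nat p) 1) \<longleftrightarrow> D = padic_dvd p"
proof -
  have P: "prime (int p)" using assms by simp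
  show ?thesis
  proof
    assume "divisibility D \<and> p_archimedean p D \<and> \<not> D (of_nat p) 1"
    thus "D = padic_dvd p" using forward[OF P] by (intro ext) blast
  next
    assume "D = padic_dvd p"
    thus "divisibility D \<and> p_archimedean p D \<and> \<not> D (of_nat p) 1"
      using padic_divisibility[OF P] padic_arch[OF P] padic_not_p1[OF P] by simp
  qed
qed

end
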